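(* Let $\lambda_0, \lambda_1$ be real numbers and $z = a + bi$ with $a \in \mathbb{R}$ and $b > 0$. Suppose $\lambda_0 \geq \max\{\lambda_1, |z|\}$. Then $\lambda_0, \lambda_1, z, \overline{z}$ are the eigenvalues of a $4 \times 4$ normal centrosymmetric nonnegative matrix if and only if $\lambda_0 + \lambda_1 - 2|a| \geq 0$ and $\lambda_0 - \lambda_1 - 2|b| \geq 0$.
   Context: $J$ is the $4 \times 4$ reverse identity matrix (ones on the anti-diagonal, zeros elsewhere). A matrix $Q$ is centrosymmetric if $JQJ = Q$, nonnegative if all entries are nonnegative, and normal if $QQ^* = Q^*Q$. *)

theory Defs
  imports "Jordan_Normal_Form.Char_Poly" "HOL-Library.Multiset"
begin

definition J4 :: "real mat" where
  "J4 = mat 4 4 (\<lambda>(i,j). if i + j = 3 then 1 else 0)"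

definition centrosymmetric4 :: "real mat \<Rightarrow> bool" where
  "centrosymmetric4 Q \<longleftrightarrow> J4 * Q * J4 = Q"

definition nonneg_mat :: "real mat \<Rightarrow> bool" where
  "nonneg_mat Q \<longleftrightarrow> (\<forall>i < dim_row Q. \<forall>j < dim_col Q. Q $$ (i,j) \<ge> 0)"

definition normal_real_mat :: "real mat \<Rightarrow> bool" where
  "normal_real_mat Q \<longleftrightarrow> Q * transpose_mat Q = transpose_mat Q * Q"

text \<open>The eigenvalues (with algebraic multiplicity) of a real square matrix Q
  form the multiset L: its characteristic polynomial over C splits with roots L.\<close>
definition eigenvalues_are :: "real mat \<Rightarrow> complex multiset \<Rightarrow> bool" where
  "eigenvalues_are Q L \<longleftrightarrow>
     char_poly (map_mat complex_of_real Q) = (\<Prod>x\<in>#L. [:- x, 1:])"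

end

theory Submission
  imports Defs
begin

definition L4 :: "'a list list \<Rightarrow> 'a mat" where
  "L4 xs = mat 4 4 (\<lambda>(i,j). xs ! i ! j)"
definition L2 :: "'a list list \<Rightarrow> 'a mat" where
  "L2 xs = mat 2 2 (\<lambda>(i,j). xs ! i ! j)"

lemma lt4: "(i::nat) < 4 \<longleftrightarrow> i = 0 \<or> i = 1 \<or> i = 2 \<or> i = 3" by auto
lemma lt2: "(i::nat) < 2 \<longleftrightarrow> i = 0 \<or> i = 1" by auto
lemma sum4: "(\<Sum>i\<in>{0..<4::nat}. f i) = f 0 + f 1 + f 2 + f 3" by (simp add: eval_nat_numeral)
lemma sum2: "(\<Sum>i\<in>{0..<2::nat}. f i) = f 0 + f 1" by (simp add: eval_nat_numeral)

lemma det2: assumes "(A :: 'a :: comm_ring_1 mat) \<in> carrier_mat 2 2"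
  shows "det A = A$$(0,0) * A$$(1,1) - A$$(0,1) * A$$(1,0)"
proof -
  have "det A = (\<Sum>i<2. A $$ (i,0) * cofactor A i 0)"
    by (rule laplace_expansion_column[OF assms], simp)
  also have "\<dots> = A $$ (0,0) * cofactor A 0 0 + A $$ (1,0) * cofactor A 1 0"
    by (simp add: eval_nat_numeral)
  also have "cofactor A 0 0 = A$$(1,1)"
  proof -
    have c: "mat_delete A 0 0 \<in> carrier_mat 1 1" using assms by auto
    have "det (mat_delete A 0 0) = (\<Sum>i<1. mat_delete A 0 0 $$ (i,0) * cofactor (mat_delete A 0 0) i 0)"
      by (rule laplace_expansion_column[OF c], simp)
    also have "\<dots> = A$$(1,1)" using assms
      by (simp add: cofactor_def mat_delete_def insert_index_def)
    finally show ?thesis by (simp add: cofactor_def)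
  qed
  also have "cofactor A 1 0 = - A$$(0,1)"
  proof -
    have c: "mat_delete A 1 0 \<in> carrier_mat 1 1" using assms by auto
    have "det (mat_delete A 1 0) = (\<Sum>i<1. mat_delete A 1 0 $$ (i,0) * cofactor (mat_delete A 1 0) i 0)"
      by (rule laplace_expansion_column[OF c], simp)
    also have "\<dots> = A$$(0,1)" using assms
      by (simp add: cofactor_def mat_delete_def insert_index_def)
    finally show ?thesis by (simp add: cofactor_def)
  qed
  finally show ?thesis by (simp add: algebra_simps)
qed

lemma char_poly_L2: fixes p q r s :: "'a :: comm_ring_1"
  shows "char_poly (L2 [[p,q],[r,s]]) = [: p*s - q*r, -(p+s), 1:]"
  unfolding char_poly_def char_poly_matrix_def
  apply (subst det2)
   apply (simp add: L2_def)
  apply (simp add: L2_def algebra_simps)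
  done

lemma char_poly_four_block_zeros: fixes A1 :: "'a :: idom mat" assumes A1: "A1 \<in> carrier_mat n n"
  and A3: "A3 \<in> carrier_mat m m"
  shows "char_poly (four_block_mat A1 (0\<^sub>m n m) (0\<^sub>m m n) A3) = char_poly A1 * char_poly A3" 
    (is "char_poly ?A = ?cp1 * ?cp3")
proof -
  let ?cm = "\<lambda> A. [:0, 1:] \<cdot>\<^sub>m 1\<^sub>m (dim_row A) +
         map_mat (\<lambda>a. [:- a:]) A"
  have "char_poly ?A = det (?cm ?A)"
    unfolding char_poly_defs using A1 A3 by simp
  also have "?cm ?A = four_block_mat (?cm A1) (0\<^sub>m n m) (0\<^sub>m m n) (?cm A3)"
    by (rule eq_matI, insert A1 A3, auto simp: one_poly_def)
  also have "det \<dots> = det (?cm A1) * det (?cm A3)"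
  proof -
    have c1: "?cm A1 \<in> carrier_mat n n" using A1 by auto
    have c3: "?cm A3 \<in> carrier_mat m m" using A3 by auto
    show ?thesis by (rule det_four_block_mat_lower_left_zero[OF c1 _ refl c3]) simp
  qed
  also have "\<dots> = ?cp1 * ?cp3" unfolding char_poly_defs ..
  finally show ?thesis .
qed

lemma char_poly_centro: fixes x0 x1 x2 x3 y0 y1 y2 y3 :: complex
  shows "char_poly (L4 [[x0,x1,x2,x3],[y0,y1,y2,y3],[y3,y2,y1,y0],[x3,x2,x1,x0]])
   = char_poly (L2 [[x0+x3, x1+x2],[y0+y3,y1+y2]]) * char_poly (L2 [[x0-x3, x1-x2],[y0-y3,y1-y2]])"
proof -
  let ?Q = "L4 [[x0,x1,x2,x3],[y0,y1,y2,y3],[y3,y2,y1,y0],[x3,x2,x1,x0]]"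
  let ?M = "L2 [[x0+x3, x1+x2],[y0+y3,y1+y2]]"
  let ?N = "L2 [[x0-x3, x1-x2],[y0-y3,y1-y2]]"
  let ?B = "four_block_mat ?M (0\<^sub>m 2 2) (0\<^sub>m 2 2) ?N"
  let ?P = "L4 [[1/2,0,1/2,0],[0,1/2,0,1/2],[0,1/2,0,-1/2],[1/2,0,-1/2,0::complex]]"
  let ?R = "L4 [[1,0,0,1],[0,1,1,0],[1,0,0,-1],[0,1,-1,0::complex]]"
  have M: "?M \<in> carrier_mat 2 2" and N: "?N \<in> carrier_mat 2 2" by (auto simp: L2_def)
  have B: "?B \<in> carrier_mat 4 4" using four_block_carrier_mat[OF M N] by simp
  have PR: "?P * ?R = 1\<^sub>m 4"
    by (rule eq_matI, auto simp: L4_def lt4 scalar_prod_def sum4)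
  have RP: "?R * ?P = 1\<^sub>m 4"
    by (rule eq_matI, auto simp: L4_def lt4 scalar_prod_def sum4)
  have PB: "?P * ?B = L4 [[(x0+x3)/2, (x1+x2)/2, (x0-x3)/2, (x1-x2)/2],
                         [(y0+y3)/2, (y1+y2)/2, (y0-y3)/2, (y1-y2)/2],
                         [(y0+y3)/2, (y1+y2)/2, -(y0-y3)/2, -(y1-y2)/2],
                         [(x0+x3)/2, (x1+x2)/2, -(x0-x3)/2, -(x1-x2)/2]]"
    using B by (intro eq_matI, auto simp: L4_def L2_def lt4 scalar_prod_def sum4 index_mat_four_block field_simps)
  have QB: "?Q = ?P * ?B * ?R"
    unfolding PB
    by (rule eq_matI, auto simp: L4_def lt4 scalar_prod_def sum4 field_simps)
  have "similar_mat ?Q ?B"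
    by (rule similar_matI[where n=4 and P="?P" and Q="?R"], insert PR RP QB B, auto simp: L4_def)
  from char_poly_similar[OF this] have "char_poly ?Q = char_poly ?B" .
  also have "\<dots> = char_poly ?M * char_poly ?N" by (rule char_poly_four_block_zeros[OF M N])
  finally show ?thesis .
qed


lemma J4_conj: assumes "Q \<in> carrier_mat 4 4"
  shows "J4 * Q * J4 = mat 4 4 (\<lambda>(i,j). Q $$ (3-i, 3-j))"
  using assms by (intro eq_matI, auto simp: J4_def lt4 scalar_prod_def sum4)

lemma Q_struct: assumes Q: "Q \<in> carrier_mat 4 4" and c: "J4 * Q * J4 = Q"
  shows "Q = L4 [[Q$$(0,0),Q$$(0,1),Q$$(0,2),Q$$(0,3)],[Q$$(1,0),Q$$(1,1),Q$$(1,2),Q$$(1,3)],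
     [Q$$(1,3),Q$$(1,2),Q$$(1,1),Q$$(1,0)],[Q$$(0,3),Q$$(0,2),Q$$(0,1),Q$$(0,0)]]"
proof -
  have e: "Q$$(i,j) = Q$$(3-i,3-j)" if "i<4" "j<4" for i j
  proof -
    have "Q$$(i,j) = (J4 * Q * J4)$$(i,j)" using c by simp
    also have "\<dots> = Q$$(3-i,3-j)" unfolding J4_conj[OF Q] using that by simp
    finally show ?thesis .
  qed
  show ?thesis using Q
    by (intro eq_matI, auto simp: L4_def lt4 e[of 2 0] e[of 2 1] e[of 2 2] e[of 2 3] e[of 3 0] e[of 3 1] e[of 3 2] e[of 3 3] e[of 2 "Suc 0"] e[of 3 "Suc 0"])
qed

lemma normal_N: fixes x0 x1 x2 x3 y0 y1 y2 y3 :: real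
  assumes "L4 [[x0,x1,x2,x3],[y0,y1,y2,y3],[y3,y2,y1,y0],[x3,x2,x1,x0]] * transpose_mat (L4 [[x0,x1,x2,x3],[y0,y1,y2,y3],[y3,y2,y1,y0],[x3,x2,x1,x0]])
    = transpose_mat (L4 [[x0,x1,x2,x3],[y0,y1,y2,y3],[y3,y2,y1,y0],[x3,x2,x1,x0]]) * L4 [[x0,x1,x2,x3],[y0,y1,y2,y3],[y3,y2,y1,y0],[x3,x2,x1,x0]]"
  shows "(x1-x2)^2 = (y0-y3)^2 \<and> ((y0-y3) - (x1-x2)) * ((x0-x3) - (y1-y2)) = 0"
proof -
  let ?Q = "L4 [[x0,x1,x2,x3],[y0,y1,y2,y3],[y3,y2,y1,y0],[x3,x2,x1,x0]]"
  have e: "(?Q * transpose_mat ?Q) $$ (i,j) = (transpose_mat ?Q * ?Q) $$ (i,j)" for i j using assms by simp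
  note E = e[of 0 0] e[of 0 1] e[of 0 2] e[of 0 3] e[of 1 1] e[of 1 2] e[of 1 3] e[of 2 2] e[of 2 3] e[of 3 3]
  have F: "x0*x0+x1*x1+x2*x2+x3*x3 = x0*x0+y0*y0+y3*y3+x3*x3"
       "x0*y0+x1*y1+x2*y2+x3*y3 = x0*x1+y0*y1+y3*y2+x3*x2"
       "x0*y3+x1*y2+x2*y1+x3*y0 = x0*x2+y0*y2+y3*y1+x3*x1"
       "x0*x3+x1*x2+x2*x1+x3*x0 = x0*x3+y0*y3+y3*y0+x3*x0"
       "y0*y0+y1*y1+y2*y2+y3*y3 = x1*x1+y1*y1+y2*y2+x2*x2"
       "y0*y3+y1*y2+y2*y1+y3*y0 = x1*x2+y1*y2+y2*y1+x2*x1"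
    using E by (simp_all add: L4_def scalar_prod_def sum4 algebra_simps)
  have G0: "x1*x2 = y0*y3" using F(4) by (simp add: algebra_simps)
  have G1: "(x1-x2)^2 = (y0-y3)^2" using F(1) G0 unfolding power2_eq_square by (simp add: algebra_simps)
  have G2: "((y0-y3) - (x1-x2)) * ((x0-x3) - (y1-y2)) = 0" using F(2) F(3) by (simp add: algebra_simps)
  show ?thesis using G1 G2 by simp
qed

lemma quad_root: fixes c0 c1 a b :: real assumes b: "b > 0"
  and r: "poly [:complex_of_real c0, complex_of_real c1, 1:] (Complex a b) = 0"
  shows "c1 = -2*a \<and> c0 = a^2 + b^2"
proof -
  from r have re: "c0 + c1 * a + (a*a - b*b) = 0" and im: "c1 * b + 2*a*b = 0"
    by (simp_all add: complex_eq_iff algebra_simps)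
  have "(c1 + 2*a) * b = 0" using im by (simp add: algebra_simps)
  with b have "c1 = -2*a" by simp
  with re show ?thesis by (simp add: power2_eq_square algebra_simps)
qed

lemma poly_nec: fixes c0 c1 d0 d1 l0 l1 a b :: real
  assumes b: "b > 0"
  and eq: "[:complex_of_real c0, of_real c1, 1:] * [:of_real d0, of_real d1, 1:] =
     [:-of_real l0,1:]*[:-of_real l1,1:]*[:-Complex a b,1:]*[:-cnj(Complex a b),1:]"
  and disc: "c1^2 - 4*c0 \<ge> 0"
  shows "d1 = -2*a \<and> d0 = a^2+b^2 \<and> c1 = -(l0+l1) \<and> c0 = l0*l1"
proof -
  let ?f = "[:complex_of_real c0, of_real c1, 1:]"
  let ?g = "[:complex_of_real d0, of_real d1, 1:]"
  let ?h = "[:-complex_of_real l0,1:]*[:-of_real l1,1:]"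
  let ?z = "Complex a b"
  have "poly (?f * ?g) ?z = 0" unfolding eq poly_mult by (simp only: poly_pCons poly_0) simp
  hence "poly ?f ?z = 0 \<or> poly ?g ?z = 0" by (simp only: poly_mult mult_eq_0_iff)
  moreover have "poly ?f ?z \<noteq> 0"
  proof
    assume "poly ?f ?z = 0"
    from quad_root[OF b this] have "c1 = -2*a" "c0 = a^2+b^2" by auto
    with disc b show False by (simp add: power2_eq_square algebra_simps)
       (smt (verit) mult_pos_pos)
  qed
  ultimately have "poly ?g ?z = 0" by blast
  from quad_root[OF b this] have d: "d1 = -2*a" "d0 = a^2+b^2" by auto
  have g: "?g = [:-?z,1:]*[:-cnj ?z,1:]"
    using d by (simp add: complex_eq_iff power2_eq_square)
  have "?f * ?g = ?h * ([:-?z,1:]*[:-cnj ?z,1:])" unfolding eq by (simp only: mult.assoc)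
  also have "\<dots> = ?h * ?g" using g by simp
  finally have "?f * ?g = ?h * ?g" .
  moreover have "?g \<noteq> 0" by simp
  ultimately have "?f = ?h" by (metis mult_right_cancel)
  hence "c0 = l0*l1 \<and> c1 = -(l0+l1)" by (simp add: complex_eq_iff)
  with d show ?thesis by simp
qed

lemma map_L4: "map_mat f (L4 [[x0,x1,x2,x3],[y0,y1,y2,y3],[y3,y2,y1,y0],[x3,x2,x1,x0]])
  = L4 [[f x0,f x1,f x2,f x3],[f y0,f y1,f y2,f y3],[f y3,f y2,f y1,f y0],[f x3,f x2,f x1,f x0]]"
  by (intro eq_matI, auto simp: L4_def lt4)

lemma cp_real: fixes x0 x1 x2 x3 y0 y1 y2 y3 :: real
  shows "char_poly (map_mat complex_of_real (L4 [[x0,x1,x2,x3],[y0,y1,y2,y3],[y3,y2,y1,y0],[x3,x2,x1,x0]]))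
   = [:of_real ((x0+x3)*(y1+y2) - (x1+x2)*(y0+y3)), of_real (-((x0+x3)+(y1+y2))), 1:]
   * [:of_real ((x0-x3)*(y1-y2) - (x1-x2)*(y0-y3)), of_real (-((x0-x3)+(y1-y2))), 1:]"
  unfolding map_L4 char_poly_centro char_poly_L2 by simp

lemma mset_prod: "(\<Prod>x\<in># {#u,v,w,t#}. [:-x,1:]) = [:-u,1:]*[:-v,1:]*[:-w,1:]*[:-(t::complex),1:]"
  by (simp only: image_mset_add_mset image_mset_empty prod_mset.add_mset prod_mset_empty mult_1_right mult_1_left mult_ac)

lemma prod_eq: fixes l0 l1 a b :: real
  shows "[:complex_of_real (l0*l1), of_real (-(l0+l1)), 1:] * [:of_real (a^2+b^2), of_real(-2*a), 1:]
   = [:-of_real l0,1:]*[:-of_real l1,1:]*[:-Complex a b,1:]*[:-cnj(Complex a b),1:]"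
proof -
  have 1: "[:complex_of_real (l0*l1), of_real (-(l0+l1)), 1:] = [:-of_real l0,1:]*[:-of_real l1,1:]"
    by (simp add: algebra_simps)
  have 2: "[:complex_of_real (a^2+b^2), of_real (-2*a), 1:] = [:-Complex a b,1:]*[:-cnj(Complex a b),1:]"
    by (simp add: complex_eq_iff power2_eq_square)
  show ?thesis unfolding 1 2 by (simp only: mult.assoc)
qed

lemma arith_nec: fixes x0 x1 x2 x3 y0 y1 y2 y3 l0 l1 a b :: real
  assumes nn: "x0 \<ge> 0" "x1 \<ge> 0" "x2 \<ge> 0" "x3 \<ge> 0" "y0 \<ge> 0" "y1 \<ge> 0" "y2 \<ge> 0" "y3 \<ge> 0"
  and b: "b > 0" and l: "l0 \<ge> l1"
  and n1: "(x1-x2)^2 = (y0-y3)^2" and n2: "((y0-y3) - (x1-x2)) * ((x0-x3) - (y1-y2)) = 0"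
  and d1: "-((x0-x3)+(y1-y2)) = -2*a" and d0: "(x0-x3)*(y1-y2) - (x1-x2)*(y0-y3) = a^2+b^2"
  and c1: "-((x0+x3)+(y1+y2)) = -(l0+l1)" and c0: "(x0+x3)*(y1+y2) - (x1+x2)*(y0+y3) = l0*l1"
  shows "l0 + l1 - 2 * \<bar>a\<bar> \<ge> 0 \<and> l0 - l1 - 2 * \<bar>b\<bar> \<ge> 0"
proof -
  define n11 where "n11 = x0-x3"
  define n22 where "n22 = y1-y2"
  define n12 where "n12 = x1-x2"
  define n21 where "n21 = y0-y3"
  have s: "n11 + n22 = 2*a" using d1 unfolding n11_def n22_def by simp
  have p: "n11*n22 - n12*n21 = a^2+b^2" using d0 unfolding n11_def n22_def n12_def n21_def by simp
  have "(n11-n22)^2 = (n11+n22)^2 - 4*(n11*n22)" by (simp add: power2_eq_square algebra_simps)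
  also have "\<dots> = -4*b^2 - 4*(n12*n21)" using s p by (simp add: power2_eq_square algebra_simps)
  finally have e: "(n11-n22)^2 = -4*b^2 - 4*(n12*n21)" .
  have "b^2 > 0" using b by simp
  moreover have "(n11-n22)^2 \<ge> 0" by simp
  ultimately have neg: "n12*n21 < 0" using e by linarith
  hence "n21 \<noteq> n12" by (metis not_square_less_zero)
  hence "n11 = n22" using n2 unfolding n11_def n22_def n12_def n21_def by simp
  hence pr: "n12*n21 = - (b^2)" using e by simp
  have "n21 = -n12"
  proof -
    from n1 have "n12^2 = n21^2" unfolding n12_def n21_def .
    hence "n12 = n21 \<or> n12 = -n21" by (simp add: power2_eq_iff)
    thus ?thesis using \<open>n21 \<noteq> n12\<close> by auto
  qed
  hence "n12^2 = b^2" using pr by (simp add: power2_eq_square)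
  hence sq: "n12^2 = b^2" .
  have "\<bar>n12\<bar> = sqrt (n12^2)" by simp
  also have "\<dots> = sqrt (b^2)" using sq by simp
  also have "\<dots> = b" using b by simp
  finally have ab12: "\<bar>n12\<bar> = b" .
  hence ab21: "\<bar>n21\<bar> = b" using \<open>n21 = -n12\<close> by simp
  have an: "\<bar>n11\<bar> = \<bar>a\<bar>" "\<bar>n22\<bar> = \<bar>a\<bar>" using s \<open>n11 = n22\<close> by auto
  define m11 where "m11 = x0+x3"
  define m22 where "m22 = y1+y2"
  define m12 where "m12 = x1+x2"
  define m21 where "m21 = y0+y3"
  have g11: "m11 \<ge> \<bar>a\<bar>" using an nn unfolding m11_def n11_def by linarith
  have g22: "m22 \<ge> \<bar>a\<bar>" using an nn unfolding m22_def n22_def by linarith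
  have g12: "m12 \<ge> b" using ab12 nn unfolding m12_def n12_def by linarith
  have g21: "m21 \<ge> b" using ab21 nn unfolding m21_def n21_def by linarith
  have ms: "m11 + m22 = l0 + l1" using c1 unfolding m11_def m22_def by simp
  have mp: "m11*m22 - m12*m21 = l0*l1" using c0 unfolding m11_def m22_def m12_def m21_def by simp
  have "b*b \<le> m12*m21" using g12 g21 b by (intro mult_mono) auto
  moreover have "4*(m11*m22) \<le> (m11+m22)^2"
  proof -
    have "(m11+m22)^2 - 4*(m11*m22) = (m11-m22)^2" by (simp add: power2_eq_square algebra_simps)
    moreover have "(m11-m22)^2 \<ge> 0" by simp
    ultimately show ?thesis by linarith
  qed
  ultimately have "4*(b*b) \<le> (l0-l1)^2" using ms mp by (simp add: power2_eq_square algebra_simps)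
  hence "(2*b)^2 \<le> (l0-l1)^2" by (simp add: power2_eq_square)
  hence "2*b \<le> l0 - l1" by (rule power2_le_imp_le) (use l in auto)
  thus ?thesis using g11 g22 ms b by simp
qed

lemma normal_special: fixes u v w t :: real
  shows "L4 [[u,v,w,t],[w,u,t,v],[v,t,u,w],[t,w,v,u]] * transpose_mat (L4 [[u,v,w,t],[w,u,t,v],[v,t,u,w],[t,w,v,u]])
    = transpose_mat (L4 [[u,v,w,t],[w,u,t,v],[v,t,u,w],[t,w,v,u]]) * L4 [[u,v,w,t],[w,u,t,v],[v,t,u,w],[t,w,v,u]]"
  by (intro eq_matI) (auto simp: L4_def lt4 scalar_prod_def sum4 algebra_simps)

theorem theorem3p2:
  fixes l0 l1 a b :: real
  assumes "b > 0"
    and "l0 \<ge> max l1 (cmod (Complex a b))"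
  shows "(\<exists>Q :: real mat. Q \<in> carrier_mat 4 4 \<and> normal_real_mat Q \<and> centrosymmetric4 Q
            \<and> nonneg_mat Q
            \<and> eigenvalues_are Q {# complex_of_real l0, complex_of_real l1, Complex a b, cnj (Complex a b) #})
         \<longleftrightarrow> (l0 + l1 - 2 * \<bar>a\<bar> \<ge> 0 \<and> l0 - l1 - 2 * \<bar>b\<bar> \<ge> 0)"
proof
  assume "\<exists>Q :: real mat. Q \<in> carrier_mat 4 4 \<and> normal_real_mat Q \<and> centrosymmetric4 Q
            \<and> nonneg_mat Q
            \<and> eigenvalues_are Q {# complex_of_real l0, complex_of_real l1, Complex a b, cnj (Complex a b) #}"
  then obtain Q :: "real mat" where Q: "Q \<in> carrier_mat 4 4" and nQ: "normal_real_mat Q"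
    and cQ: "centrosymmetric4 Q" and pQ: "nonneg_mat Q"
    and eQ: "eigenvalues_are Q {# complex_of_real l0, complex_of_real l1, Complex a b, cnj (Complex a b) #}"
    by blast
  define x0 where "x0 = Q$$(0,0)"
  define x1 where "x1 = Q$$(0,1)"
  define x2 where "x2 = Q$$(0,2)"
  define x3 where "x3 = Q$$(0,3)"
  define y0 where "y0 = Q$$(1,0)"
  define y1 where "y1 = Q$$(1,1)"
  define y2 where "y2 = Q$$(1,2)"
  define y3 where "y3 = Q$$(1,3)"
  have Qs: "Q = L4 [[x0,x1,x2,x3],[y0,y1,y2,y3],[y3,y2,y1,y0],[x3,x2,x1,x0]]"
    unfolding x0_def x1_def x2_def x3_def y0_def y1_def y2_def y3_def
    by (rule Q_struct[OF Q cQ[unfolded centrosymmetric4_def]])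
  have nn: "x0 \<ge> 0" "x1 \<ge> 0" "x2 \<ge> 0" "x3 \<ge> 0" "y0 \<ge> 0" "y1 \<ge> 0" "y2 \<ge> 0" "y3 \<ge> 0"
    using pQ Q unfolding nonneg_mat_def x0_def x1_def x2_def x3_def y0_def y1_def y2_def y3_def
    by auto
  from normal_N[OF nQ[unfolded normal_real_mat_def Qs]]
  have n1: "(x1-x2)^2 = (y0-y3)^2" and n2: "((y0-y3) - (x1-x2)) * ((x0-x3) - (y1-y2)) = 0" by auto
  define c0 where "c0 = (x0+x3)*(y1+y2) - (x1+x2)*(y0+y3)"
  define c1 where "c1 = -((x0+x3)+(y1+y2))"
  define d0 where "d0 = (x0-x3)*(y1-y2) - (x1-x2)*(y0-y3)"
  define d1 where "d1 = -((x0-x3)+(y1-y2))"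
  have eq: "[:complex_of_real c0, of_real c1, 1:] * [:of_real d0, of_real d1, 1:] =
     [:-of_real l0,1:]*[:-of_real l1,1:]*[:-Complex a b,1:]*[:-cnj(Complex a b),1:]"
    using eQ unfolding eigenvalues_are_def Qs cp_real mset_prod c0_def c1_def d0_def d1_def .
  have disc: "c1^2 - 4*c0 \<ge> 0"
  proof -
    have "c1^2 - 4*c0 = ((x0+x3)-(y1+y2))^2 + 4*((x1+x2)*(y0+y3))"
      unfolding c0_def c1_def by (simp add: power2_eq_square algebra_simps)
    also have "\<dots> \<ge> 0" using nn by (intro add_nonneg_nonneg) auto
    finally show ?thesis .
  qed
  from poly_nec[OF assms(1) eq disc]
  have r: "d1 = -2*a" "d0 = a^2+b^2" "c1 = -(l0+l1)" "c0 = l0*l1" by auto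
  show "l0 + l1 - 2 * \<bar>a\<bar> \<ge> 0 \<and> l0 - l1 - 2 * \<bar>b\<bar> \<ge> 0"
    by (rule arith_nec[OF nn assms(1) _ n1 n2], insert assms(2) r, auto simp: c0_def c1_def d0_def d1_def)
next
  assume h: "l0 + l1 - 2 * \<bar>a\<bar> \<ge> 0 \<and> l0 - l1 - 2 * \<bar>b\<bar> \<ge> 0"
  define p where "p = (l0+l1)/2"
  define q where "q = (l0-l1)/2"
  have hp: "p \<ge> \<bar>a\<bar>" and hq: "q \<ge> b" using h assms(1) unfolding p_def q_def by auto
  define x0 where "x0 = (p+a)/2"
  define x1 where "x1 = (q-b)/2"
  define x2 where "x2 = (q+b)/2"
  define x3 where "x3 = (p-a)/2"
  define y0 where "y0 = (q+b)/2"
  define y1 where "y1 = (p+a)/2"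
  define y2 where "y2 = (p-a)/2"
  define y3 where "y3 = (q-b)/2"
  define Q where "Q = L4 [[x0,x1,x2,x3],[y0,y1,y2,y3],[y3,y2,y1,y0],[x3,x2,x1,x0]]"
  have Q: "Q \<in> carrier_mat 4 4" unfolding Q_def L4_def by simp
  have nn: "x0 \<ge> 0" "x1 \<ge> 0" "x2 \<ge> 0" "x3 \<ge> 0" "y0 \<ge> 0" "y1 \<ge> 0" "y2 \<ge> 0" "y3 \<ge> 0"
    using hp hq assms(1) unfolding x0_def x1_def x2_def x3_def y0_def y1_def y2_def y3_def by auto
  have nQ: "normal_real_mat Q"
  proof -
    have "y0 = x2" "y1 = x0" "y2 = x3" "y3 = x1"
      unfolding x0_def x1_def x2_def x3_def y0_def y1_def y2_def y3_def by auto
    thus ?thesis unfolding normal_real_mat_def Q_def using normal_special by simp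
  qed
  have cQ: "centrosymmetric4 Q"
    unfolding centrosymmetric4_def J4_conj[OF Q]
    by (intro eq_matI) (auto simp: Q_def L4_def lt4)
  have pQ: "nonneg_mat Q"
    unfolding nonneg_mat_def using nn by (auto simp: Q_def L4_def lt4)
  have eQ: "eigenvalues_are Q {# complex_of_real l0, complex_of_real l1, Complex a b, cnj (Complex a b) #}"
  proof -
    have c0: "(x0+x3)*(y1+y2) - (x1+x2)*(y0+y3) = l0*l1"
      unfolding x0_def x1_def x2_def x3_def y0_def y1_def y2_def y3_def p_def q_def
      by (simp add: field_simps power2_eq_square)
    have c1: "-((x0+x3)+(y1+y2)) = -(l0+l1)"
      unfolding x0_def x1_def x2_def x3_def y0_def y1_def y2_def y3_def p_def q_def
      by (simp add: field_simps)
    have d0: "(x0-x3)*(y1-y2) - (x1-x2)*(y0-y3) = a^2+b^2"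
      unfolding x0_def x1_def x2_def x3_def y0_def y1_def y2_def y3_def
      by (simp add: field_simps power2_eq_square)
    have d1: "-((x0-x3)+(y1-y2)) = -2*a"
      unfolding x0_def x1_def x2_def x3_def y0_def y1_def y2_def y3_def
      by (simp add: field_simps)
    show ?thesis unfolding eigenvalues_are_def Q_def cp_real mset_prod c0 c1 d0 d1 prod_eq ..
  qed
  show "\<exists>Q :: real mat. Q \<in> carrier_mat 4 4 \<and> normal_real_mat Q \<and> centrosymmetric4 Q
            \<and> nonneg_mat Q
            \<and> eigenvalues_are Q {# complex_of_real l0, complex_of_real l1, Complex a b, cnj (Complex a b) #}"
    using Q nQ cQ pQ eQ by blast
qed

end
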